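(* As $n\to\infty$, $\displaystyle |D_n|\sim\frac{2\alpha}{\pi^2}\,n\log n$, where $\alpha=\log\sqrt{1+\sqrt2}$.
   Context: For real $n>0$, $D_n$ is the set of triples $(k,r,s)\in\mathbf Z^3$ with $k>0$ odd, $r>s>0$, $\gcd(r,s)=1$, $r\not\equiv s\pmod 2$, $k(r^2-s^2)\le n$ and $2krs\le n$. *)

theory Defs
  imports "HOL-Analysis.Analysis" "HOL-Library.Landau_Symbols"
begin

definition D :: "real \<Rightarrow> (int \<times> int \<times> int) set" where
  "D n = {(k, r, s). k > 0 \<and> odd k \<and> r > s \<and> s > 0 \<and> gcd r s = 1 \<and>
            r mod 2 \<noteq> s mod 2 \<and>
            real_of_int (k * (r\<^sup>2 - s\<^sup>2)) \<le> n \<and> real_of_int (2 * k * r * s) \<le> n}"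

definition alpha :: real where
  "alpha = ln (sqrt (1 + sqrt 2))"

end

theory Submission
  imports Defs "HOL-Real_Asymp.Real_Asymp"
begin

definition t0 :: real where "t0 = sqrt ((sqrt 2 - 1)/2)"
definition cc :: "real \<Rightarrow> real" where "cc x = sqrt x * t0"

lemma t0_pos: "t0 > 0" unfolding t0_def by simp
lemma t0_sq: "t0^2 = (sqrt 2 - 1)/2" unfolding t0_def by simp
lemma t0_prop: "t0^2 * (1 + t0^2) = 1/4"
  unfolding t0_sq by (simp add: field_simps power2_eq_square)
lemma sqrt2_lt2: "sqrt 2 < (2::real)"
proof -
  have "sqrt 2 < sqrt (4::real)" by (rule real_sqrt_less_mono) simp
  thus ?thesis by (simp add: real_sqrt_four)
qed
lemma sqrt2_gt1: "sqrt 2 > (1::real)" by simp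
lemma t0_lt: "t0 < sqrt (1/2)"
  unfolding t0_def by (rule real_sqrt_less_mono) (use sqrt2_lt2 in simp)

lemma cc_pos: "x > 0 \<Longrightarrow> cc x > 0" unfolding cc_def using t0_pos by simp
lemma cc_sq: "x > 0 \<Longrightarrow> (cc x)^2 = x * t0^2" unfolding cc_def by (simp add: power_mult_distrib)

lemma cc_lt: assumes "x > 0" shows "cc x < sqrt (x/2)"
proof -
  have "sqrt (x/2) = sqrt x * sqrt (1/2)" by (simp add: real_sqrt_mult[symmetric])
  thus ?thesis unfolding cc_def using t0_lt assms by simp
qed

lemma sqrt_cc: assumes "x > 0" shows "sqrt (x + (cc x)^2) = x / (2 * cc x)"
proof -
  have c: "cc x > 0" using cc_pos assms by simp
  have "(x / (2 * cc x))^2 = x + (cc x)^2"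
  proof -
    have "(x + (cc x)^2) * (4 * (cc x)^2) = x^2 * (4 * (t0^2 * (1 + t0^2)))"
      using cc_sq[OF assms] by (simp add: algebra_simps power2_eq_square)
    also have "\<dots> = x^2" using t0_prop by simp
    finally show ?thesis using c by (simp add: field_simps power2_eq_square)
  qed
  moreover have "x / (2 * cc x) > 0" using c assms by simp
  ultimately show ?thesis by (metis real_sqrt_abs abs_of_pos)
qed

definition ff :: "real \<Rightarrow> real \<Rightarrow> real" where
  "ff x t = max 0 (min (sqrt (x + t^2) - t) (x / (2 * max t (cc x)) - t))"

lemma sqrt_dec: assumes "x > 0" "0 \<le> s" "s \<le> t"
  shows "sqrt (x + t^2) - t \<le> sqrt (x + s^2) - s"
proof -
  have "s \<le> sqrt (x + s^2)" using assms by (simp add: real_le_rsqrt)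
  have "x + t^2 \<le> (sqrt (x + s^2) + (t - s))^2"
  proof -
    have "(sqrt (x + s^2) + (t - s))^2 = x + s^2 + 2*(t-s)* sqrt (x + s^2) + (t-s)^2"
      using assms by (simp add: power2_eq_square algebra_simps)
    moreover have "2*(t-s)* s \<le> 2*(t-s)* sqrt (x + s^2)"
      using \<open>s \<le> sqrt (x + s^2)\<close> assms by (intro mult_left_mono) auto
    ultimately show ?thesis by (simp add: power2_eq_square algebra_simps)
  qed
  moreover have "0 \<le> sqrt (x + s^2) + (t - s)" using assms by simp
  ultimately have "sqrt (x + t^2) \<le> sqrt (x + s^2) + (t - s)"
    using real_le_lsqrt by blast
  thus ?thesis by simp
qed

lemma ff_mono: assumes "x > 0" "0 \<le> s" "s \<le> t" shows "ff x t \<le> ff x s"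
proof -
  have c: "cc x > 0" using cc_pos assms by simp
  have "x / (2 * max t (cc x)) \<le> x / (2 * max s (cc x))"
    using assms c by (intro divide_left_mono) auto
  thus ?thesis unfolding ff_def using sqrt_dec[OF assms] assms
    by (intro max.mono order.refl min.mono) auto
qed

lemma ff_nonneg: "ff x t \<ge> 0" unfolding ff_def by simp

lemma ff_cont: assumes "x > 0" shows "continuous_on {0..} (ff x)"
proof -
  have c: "cc x > 0" using cc_pos assms by simp
  show ?thesis unfolding ff_def
    using c by (intro continuous_intros) auto
qed

lemma ff_piece1: assumes "x > 0" "0 \<le> t" "t \<le> cc x"
  shows "ff x t = sqrt (x + t^2) - t"
proof -
  have c: "cc x > 0" using cc_pos assms by simp
  have "sqrt (x + t^2) \<le> sqrt (x + (cc x)^2)"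
    using assms by (simp add: power_mono)
  hence "sqrt (x + t^2) - t \<le> x / (2 * max t (cc x)) - t"
    using assms sqrt_cc[OF assms(1)] by (simp add: max_def)
  moreover have "t < sqrt (x + t^2)"
    using assms by (simp add: real_less_rsqrt)
  ultimately show ?thesis unfolding ff_def by simp
qed

lemma ff_piece2: assumes "x > 0" "cc x \<le> t" "t \<le> sqrt (x/2)"
  shows "ff x t = x / (2*t) - t"
proof -
  have c: "cc x > 0" using cc_pos assms by simp
  have "x / (2*t) \<le> x / (2 * cc x)" using assms c by (intro divide_left_mono) auto
  also have "\<dots> = sqrt (x + (cc x)^2)" using sqrt_cc[OF assms(1)] by simp
  also have "\<dots> \<le> sqrt (x + t^2)" using assms c by (simp add: power_mono)
  finally have 1: "x / (2*t) - t \<le> sqrt (x + t^2) - t" by simp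
  have "t^2 \<le> (sqrt (x/2))^2" using assms c by (intro power_mono) auto
  hence "t^2 \<le> x/2" using assms by simp
  hence "t \<le> x / (2*t)" using c assms by (simp add: field_simps power2_eq_square)
  thus ?thesis unfolding ff_def using 1 assms by (simp add: max_def)
qed

lemma ff_piece3: assumes "x > 0" "sqrt (x/2) \<le> t"
  shows "ff x t = 0"
proof -
  have c: "cc x > 0" using cc_pos assms by simp
  have ct: "cc x \<le> t" using cc_lt[OF assms(1)] assms by simp
  have "(sqrt (x/2))^2 \<le> t^2" using assms by (intro power_mono) auto
  hence "x/2 \<le> t^2" using assms by simp
  hence "x / (2*t) \<le> t" using c ct by (simp add: field_simps power2_eq_square)
  thus ?thesis unfolding ff_def using ct by (simp add: max_def)
qed

lemma ff_alt: assumes "x > 0" "t > 0"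
  shows "ff x t = max 0 (min (sqrt (x + t^2)) (x / (2*t)) - t)"
proof (cases "t \<le> cc x")
  case True
  have c: "cc x > 0" using cc_pos assms by simp
  have "x / (2 * cc x) \<le> x / (2*t)" using assms True by (intro divide_left_mono) auto
  moreover have "sqrt (x + t^2) \<le> sqrt (x + (cc x)^2)" using assms True by (simp add: power_mono)
  ultimately show ?thesis unfolding ff_def using True sqrt_cc[OF assms(1)]
    by (simp add: max_def min_def)
next
  case False
  then show ?thesis unfolding ff_def by (simp add: max_def min_def)
qed

definition F1 :: "real \<Rightarrow> real \<Rightarrow> real" where
  "F1 x t = (t * sqrt (x + t^2) + x * ln (t + sqrt (x + t^2)))/2 - t^2/2"
definition F2 :: "real \<Rightarrow> real \<Rightarrow> real" where
  "F2 x t = x/2 * ln t - t^2/2"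

lemma F1_deriv: assumes "x > 0" "t \<ge> 0"
  shows "(F1 x has_real_derivative (sqrt (x + t^2) - t)) (at t)"
proof -
  have q: "x + t^2 > 0" using assms by (simp add: add_pos_nonneg)
  define s where "s = sqrt (x + t^2)"
  have s: "s > 0" "s^2 = x + t^2" using q by (auto simp: s_def)
  have ts: "t + s > 0" using s assms by simp
  have key: "inverse s * t * t * 2 + (1 + inverse s * t) * x * 2 / (t + s) = 2 * s"
  proof -
    have "(1 + inverse s * t) = (t + s) / s" using s by (simp add: field_simps)
    hence "(1 + inverse s * t) * x * 2 / (t + s) = ((t + s) / (t + s)) * (2 * x / s)" by simp
    also have "\<dots> = 2 * x / s" using ts by simp
    finally have "(1 + inverse s * t) * x * 2 / (t + s) = 2 * x / s" .
    moreover have "inverse s * t * t * 2 = 2 * t^2 / s" by (simp add: field_simps power2_eq_square)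
    ultimately have "inverse s * t * t * 2 + (1 + inverse s * t) * x * 2 / (t + s) = 2 * (x + t^2) / s"
      by (simp add: add_divide_distrib)
    also have "\<dots> = 2 * s" using s by (simp add: field_simps power2_eq_square)
    finally show ?thesis .
  qed
  show ?thesis unfolding F1_def[abs_def]
  apply (rule DERIV_cong)
   apply (auto intro!: derivative_eq_intros simp: q ts[unfolded s_def])
    using q apply simp_all
    using key unfolding s_def by simp
qed

lemma F2_deriv: assumes "t > 0"
  shows "(F2 x has_real_derivative (x / (2*t) - t)) (at t)"
  unfolding F2_def[abs_def]
  apply (rule DERIV_cong)
   apply (auto intro!: derivative_eq_intros simp: assms)
  done

lemma ratio_val: assumes "x > 0"
  shows "(cc x + x / (2 * cc x)) * sqrt (x/2) / (sqrt x * cc x) = 1 + sqrt 2"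
proof -
  define u where "u = sqrt x"
  have u: "u > 0" "x = u^2" using assms by (auto simp: u_def)
  have b: "sqrt (x/2) = u / sqrt 2" by (simp add: real_sqrt_divide u_def)
  have c: "cc x = u * t0" by (simp add: cc_def u_def)
  have t: "t0 > 0" "2 * t0^2 = sqrt 2 - 1" using t0_pos t0_sq by auto
  have xc0: "x / (2 * cc x) = (u*u)/(2*(u*t0))" unfolding c using u(2) by (simp only: power2_eq_square)
  have xc: "x / (2 * cc x) = u / (2 * t0)" unfolding xc0 using u(1) by simp
  have "(cc x + x / (2 * cc x)) * sqrt (x/2) / (sqrt x * cc x)
      = (u*t0 + u/(2*t0)) * (u/sqrt 2) / (u*(u*t0))" unfolding xc unfolding b c u_def[symmetric] by simp
  also have "\<dots> = (1 + 1 / (2 * t0^2)) / sqrt 2"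
    using u(1) t(1) by (simp add: field_simps power2_eq_square)
  also have "1 / (2 * t0^2) = sqrt 2 + 1"
  proof -
    have "(sqrt 2 - 1) * (sqrt 2 + 1) = (1::real)" by (simp add: algebra_simps)
    thus ?thesis unfolding t(2) by (simp add: field_simps)
  qed
  also have "(1 + (sqrt 2 + 1)) / sqrt 2 = 1 + sqrt (2::real)"
    by (simp add: field_simps)
  finally show ?thesis .
qed

lemma ff_integral: assumes "x > 0" "sqrt (x/2) \<le> B"
  shows "(ff x has_integral (x * alpha)) {0..B}"
proof -
  define c where "c = cc x"
  define b where "b = sqrt (x/2)"
  have c: "0 < c" "c < b" using cc_pos[OF assms(1)] cc_lt[OF assms(1)] by (auto simp: c_def b_def)
  have h1: "(ff x has_integral (F1 x c - F1 x 0)) {0..c}"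
  proof -
    have "((\<lambda>t. sqrt (x + t^2) - t) has_integral (F1 x c - F1 x 0)) {0..c}"
      using c F1_deriv[OF assms(1)] by (intro fundamental_theorem_of_calculus)
        (auto simp: has_real_derivative_iff_has_vector_derivative intro: has_vector_derivative_at_within)
    thus ?thesis by (rule has_integral_eq[rotated]) (use ff_piece1 assms c_def in auto)
  qed
  have h2: "(ff x has_integral (F2 x b - F2 x c)) {c..b}"
  proof -
    have "((\<lambda>t. x / (2*t) - t) has_integral (F2 x b - F2 x c)) {c..b}"
      using c F2_deriv by (intro fundamental_theorem_of_calculus)
        (auto simp: has_real_derivative_iff_has_vector_derivative intro: has_vector_derivative_at_within)
    thus ?thesis by (rule has_integral_eq[rotated]) (use ff_piece2 assms c_def b_def in auto)
  qed
  have h3: "(ff x has_integral 0) {b..B}"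
  proof -
    have "((\<lambda>t. 0) has_integral 0) {b..B}" by simp
    thus ?thesis by (rule has_integral_eq[rotated]) (use ff_piece3 assms b_def in auto)
  qed
  have "(ff x has_integral ((F1 x c - F1 x 0) + (F2 x b - F2 x c))) {0..b}"
    using c by (intro has_integral_combine[OF _ _ h1 h2]) auto
  hence H: "(ff x has_integral ((F1 x c - F1 x 0) + (F2 x b - F2 x c) + 0)) {0..B}"
    using c assms b_def by (intro has_integral_combine[OF _ _ _ h3]) auto
  have sc: "sqrt (x + c^2) = x / (2*c)" using sqrt_cc[OF assms(1)] c_def by simp
  have pos: "c + x / (2*c) > 0" "sqrt x > 0" "b > 0" using c assms by (auto intro!: add_pos_pos)
  have bb: "b^2 = x/2" using assms by (simp add: b_def)
  have "(F1 x c - F1 x 0) + (F2 x b - F2 x c)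
      = x/2 * (ln (c + x/(2*c)) + ln b - ln (sqrt x) - ln c)"
  proof -
    have e1: "F1 x c = x/4 + x/2 * ln (c + x/(2*c)) - c^2/2"
      unfolding F1_def sc using c by (simp add: field_simps)
    have e2: "F1 x 0 = x/2 * ln (sqrt x)" unfolding F1_def by simp
    have e3: "F2 x b - F2 x c = x/2 * ln b - x/4 - x/2 * ln c + c^2/2"
      unfolding F2_def bb by simp
    show ?thesis unfolding e1 e2 e3 by (simp add: algebra_simps)
  qed
  also have "ln (c + x/(2*c)) + ln b - ln (sqrt x) - ln c = ln ((c + x/(2*c)) * b / (sqrt x * c))"
    using pos c by (simp add: ln_mult ln_div)
  also have "(c + x/(2*c)) * b / (sqrt x * c) = 1 + sqrt 2"
    using ratio_val[OF assms(1)] by (simp add: c_def b_def)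
  also have "x / 2 * ln (1 + sqrt 2) = x * alpha"
    unfolding alpha_def by (simp add: ln_sqrt add_pos_pos)
  finally show ?thesis using H by simp
qed

definition Qset :: "real \<Rightarrow> (int \<times> int) set" where
  "Qset y = {(r, s). s < r \<and> 0 < s \<and> r mod 2 \<noteq> s mod 2 \<and>
     real_of_int (r^2 - s^2) \<le> y \<and> real_of_int (2 * r * s) \<le> y}"

definition rowset :: "real \<Rightarrow> int \<Rightarrow> int set" where
  "rowset y s = {r. s < r \<and> r mod 2 \<noteq> s mod 2 \<and>
     real_of_int (r^2 - s^2) \<le> y \<and> real_of_int (2 * r * s) \<le> y}"

lemma card_par:
  fixes s :: int and M :: real
  shows "card {r::int. s < r \<and> r mod 2 \<noteq> s mod 2 \<and> of_int r \<le> M} = nat \<lfloor>(M - of_int s + 1)/2\<rfloor>"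
proof -
  define K where "K = \<lfloor>(M - of_int s + 1)/2\<rfloor>"
  have "{r::int. s < r \<and> r mod 2 \<noteq> s mod 2 \<and> of_int r \<le> M} = (\<lambda>j. s + 1 + 2*j) ` {0..<K}"
  proof (intro equalityI subsetI)
    fix r assume "r \<in> {r::int. s < r \<and> r mod 2 \<noteq> s mod 2 \<and> of_int r \<le> M}"
    hence r: "s < r" "r mod 2 \<noteq> s mod 2" "of_int r \<le> M" by auto
    define j where "j = (r - s - 1) div 2"
    have o: "(r - s - 1) mod 2 = 0" using r(2) by presburger
    have rj1: "r = s + 1 + 2*j" using o unfolding j_def by presburger
    have rj: "r = s + 1 + 2*j" "0 \<le> j" using rj1 r(1) by auto
    have "of_int (j + 1) \<le> (M - of_int s + 1)/2" using r(3) rj(1) by simp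
    hence "j + 1 \<le> K" unfolding K_def by (simp add: le_floor_iff)
    thus "r \<in> (\<lambda>j. s + 1 + 2*j) ` {0..<K}" using rj by auto
  next
    fix r assume "r \<in> (\<lambda>j. s + 1 + 2*j) ` {0..<K}"
    then obtain j where j: "r = s + 1 + 2*j" "0 \<le> j" "j < K" by auto
    have "j + 1 \<le> K" using j by simp
    hence "of_int (j + 1) \<le> (M - of_int s + 1)/2" unfolding K_def by (simp add: le_floor_iff)
    hence "of_int r \<le> M" using j by simp
    moreover have "r mod 2 \<noteq> s mod 2" using j(1) by presburger
    moreover have "s < r" using j by simp
    ultimately show "r \<in> {r::int. s < r \<and> r mod 2 \<noteq> s mod 2 \<and> of_int r \<le> M}" by auto
  qed
  moreover have "inj_on (\<lambda>j. s + 1 + 2*j) {0..<K}" by (auto simp: inj_on_def)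
  ultimately show ?thesis by (simp add: card_image K_def)
qed

lemma card_par_bound:
  fixes s :: int and M :: real
  shows "\<bar>real (nat \<lfloor>(M - of_int s + 1)/2\<rfloor>) - max 0 (M - of_int s)/2\<bar> \<le> 1"
proof -
  define d where "d = M - of_int s"
  define F where "F = \<lfloor>(d + 1)/2\<rfloor>"
  have F1: "real_of_int F \<le> (d + 1)/2" "(d+1)/2 - 1 < real_of_int F" unfolding F_def by linarith+
  show ?thesis
  proof (cases "d \<ge> 0")
    case True
    hence "F \<ge> 0" unfolding F_def by simp
    hence "real (nat F) = real_of_int F" by simp
    thus ?thesis using True F1 unfolding d_def[symmetric] F_def[symmetric] by (simp add: abs_le_iff)
  next
    case False
    hence "F \<le> 0" unfolding F_def by (simp add: floor_le_iff)
    thus ?thesis using False unfolding d_def[symmetric] F_def[symmetric] by simp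
  qed
qed

lemma row_eq: assumes "x > 0" "s > 0"
  shows "rowset x s = {r::int. s < r \<and> r mod 2 \<noteq> s mod 2 \<and>
     of_int r \<le> min (sqrt (x + (of_int s)^2)) (x / (2 * of_int s))}"
proof -
  have "(real_of_int (r^2 - s^2) \<le> x \<and> real_of_int (2 * r * s) \<le> x) \<longleftrightarrow>
        of_int r \<le> min (sqrt (x + (of_int s)^2)) (x / (2 * of_int s))" if "s < r" for r
  proof -
    have rpos: "real_of_int r > 0" using that assms by simp
    have "real_of_int (r^2 - s^2) \<le> x \<longleftrightarrow> (of_int r)^2 \<le> x + (of_int s)^2"
      unfolding of_int_diff of_int_power by linarith
    also have "\<dots> \<longleftrightarrow> sqrt ((of_int r)^2) \<le> sqrt (x + (of_int s)^2)"
      by (rule real_sqrt_le_iff[symmetric])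
    also have "sqrt ((of_int r)^2) = (of_int r :: real)" using rpos by simp
    finally have 1: "real_of_int (r^2 - s^2) \<le> x \<longleftrightarrow> of_int r \<le> sqrt (x + (of_int s)^2)" .
    have "real_of_int (2 * r * s) \<le> x \<longleftrightarrow> of_int r * (2 * of_int s) \<le> x" by (simp add: ac_simps)
    also have "\<dots> \<longleftrightarrow> of_int r \<le> x / (2 * of_int s)" using assms by (simp add: pos_le_divide_eq)
    finally show ?thesis using 1 by simp
  qed
  thus ?thesis unfolding rowset_def by blast
qed

lemma row_finite: assumes "s > 0" shows "finite (rowset x s)"
proof -
  have "rowset x s \<subseteq> {0..\<lfloor>x\<rfloor>}"
  proof
    fix r assume "r \<in> rowset x s"
    hence r: "s < r" "real_of_int (2 * r * s) \<le> x" unfolding rowset_def by auto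
    have "r \<le> 2 * r * s" using r assms by (simp add: mult_le_cancel_left1 )
    hence "real_of_int r \<le> x" using r by linarith
    thus "r \<in> {0..\<lfloor>x\<rfloor>}" using r assms by (simp add: le_floor_iff)
  qed
  thus ?thesis by (rule finite_subset) simp
qed

lemma row_card: assumes "x > 0" "k > 0"
  shows "\<bar>real (card (rowset x (int k))) - ff x (real k) / 2\<bar> \<le> 1"
proof -
  define M where "M = min (sqrt (x + (real k)^2)) (x / (2 * real k))"
  have "rowset x (int k) = {r. int k < r \<and> r mod 2 \<noteq> int k mod 2 \<and> of_int r \<le> M}"
    unfolding M_def using row_eq[OF assms(1), of "int k"] assms by simp
  hence "card (rowset x (int k)) = nat \<lfloor>(M - of_int (int k) + 1)/2\<rfloor>"
    using card_par[of "int k" M] by (simp only:)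
  moreover have "ff x (real k) = max 0 (M - real k)" unfolding M_def using assms ff_alt by simp
  ultimately show ?thesis using card_par_bound[of M "int k"] by simp
qed

lemma Qset_UN: assumes "x > 0"
  shows "Qset x = (\<Union>k\<in>{1..nat \<lceil>sqrt x\<rceil>}. (\<lambda>r. (r, int k)) ` rowset x (int k))"
proof (intro equalityI subsetI)
  fix p assume "p \<in> Qset x"
  then obtain r s where p: "p = (r, s)" "s < r" "0 < s" "r mod 2 \<noteq> s mod 2"
     "real_of_int (r^2 - s^2) \<le> x" "real_of_int (2 * r * s) \<le> x" unfolding Qset_def by auto
  have "s * s \<le> 2 * r * s" using p by (simp add: mult_right_mono)
  hence "real_of_int s ^ 2 \<le> x" using p(6) unfolding power2_eq_square by (metis of_int_le_iff of_int_mult order_trans)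
  hence "real_of_int s \<le> sqrt x" by (simp add: real_le_rsqrt)
  hence "s \<le> \<lceil>sqrt x\<rceil>" by linarith
  hence "nat s \<in> {1..nat \<lceil>sqrt x\<rceil>}" using p by auto
  moreover have "r \<in> rowset x (int (nat s))" using p unfolding rowset_def by auto
  ultimately show "p \<in> (\<Union>k\<in>{1..nat \<lceil>sqrt x\<rceil>}. (\<lambda>r. (r, int k)) ` rowset x (int k))"
    using p by force
next
  fix p assume "p \<in> (\<Union>k\<in>{1..nat \<lceil>sqrt x\<rceil>}. (\<lambda>r. (r, int k)) ` rowset x (int k))"
  thus "p \<in> Qset x" unfolding Qset_def rowset_def by auto
qed

lemma Qset_card: assumes "x > 0"
  shows "real (card (Qset x)) = (\<Sum>k\<in>{1..nat \<lceil>sqrt x\<rceil>}. real (card (rowset x (int k))))"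
proof -
  have "card (Qset x) = (\<Sum>k\<in>{1..nat \<lceil>sqrt x\<rceil>}. card ((\<lambda>r. (r, int k)) ` rowset x (int k)))"
    unfolding Qset_UN[OF assms]
    by (rule card_UN_disjoint) (auto intro!: row_finite)
  also have "\<dots> = (\<Sum>k\<in>{1..nat \<lceil>sqrt x\<rceil>}. card (rowset x (int k)))"
    by (intro sum.cong refl card_image) (auto simp: inj_on_def)
  finally show ?thesis by simp
qed

lemma Q_asymp_bound: assumes "x > 0"
  shows "\<bar>real (card (Qset x)) - x * alpha / 2\<bar> \<le> 2 * sqrt x + 1"
proof -
  define N where "N = nat \<lceil>sqrt x\<rceil>"
  have N0: "real N = of_int \<lceil>sqrt x\<rceil>" unfolding N_def using assms by simp
  have N: "real N \<ge> sqrt x" "real N \<le> sqrt x + 1" unfolding N0 using ceiling_correct[of "sqrt x"] by linarith+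
  interpret A: antimono_fun_sum_integral_diff "ff x"
    using ff_mono[OF assms] ff_nonneg ff_cont[OF assms] by unfold_locales auto
  have int: "integral {0..real N} (ff x) = x * alpha"
  proof -
    have "sqrt (x/2) \<le> sqrt x" using assms by simp
    thus ?thesis using ff_integral[OF assms, of "real N"] N by (intro integral_unique) linarith
  qed
  have f0: "ff x 0 = sqrt x" using ff_piece1[OF assms, of 0] cc_pos[OF assms] by simp
  have s1: "A.sum_integral_diff_series N \<ge> 0" by (rule A.sum_integral_diff_series_nonneg)
  have s2: "A.sum_integral_diff_series N \<le> A.sum_integral_diff_series 0"
    by (rule A.sum_integral_diff_series_antimono) simp
  have s0: "A.sum_integral_diff_series 0 = sqrt x" unfolding A.sum_integral_diff_series_def using f0 by simp
  have sumsplit: "(\<Sum>k\<le>N. ff x (real k)) = ff x 0 + (\<Sum>k\<in>{1..N}. ff x (real k))"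
  proof -
    have "{..N} = insert 0 {1..N}" by auto
    thus ?thesis by simp
  qed
  have S: "x * alpha - sqrt x \<le> (\<Sum>k\<in>{1..N}. ff x (real k))" "(\<Sum>k\<in>{1..N}. ff x (real k)) \<le> x * alpha"
    using s1 s2 s0 sumsplit f0 int unfolding A.sum_integral_diff_series_def by linarith+
  have E: "\<bar>(\<Sum>k\<in>{1..N}. real (card (rowset x (int k)))) - (\<Sum>k\<in>{1..N}. ff x (real k) / 2)\<bar> \<le> real N"
  proof -
    have "\<bar>(\<Sum>k\<in>{1..N}. real (card (rowset x (int k)))) - (\<Sum>k\<in>{1..N}. ff x (real k) / 2)\<bar>
        = \<bar>\<Sum>k\<in>{1..N}. (real (card (rowset x (int k))) - ff x (real k) / 2)\<bar>"
      by (simp add: sum_subtractf)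
    also have "\<dots> \<le> (\<Sum>k\<in>{1..N}. \<bar>real (card (rowset x (int k))) - ff x (real k) / 2\<bar>)"
      by (rule sum_abs)
    also have "\<dots> \<le> (\<Sum>k\<in>{1..N}. 1)" by (intro sum_mono row_card assms) auto
    finally show ?thesis by simp
  qed
  have "(\<Sum>k\<in>{1..N}. ff x (real k) / 2) = (\<Sum>k\<in>{1..N}. ff x (real k)) / 2"
    by (simp add: sum_divide_distrib)
  thus ?thesis using E S N Qset_card[OF assms] unfolding N_def[symmetric]
    by (simp add: abs_le_iff)
qed

definition Pset :: "real \<Rightarrow> (int \<times> int) set" where
  "Pset y = {(r, s). s < r \<and> 0 < s \<and> gcd r s = 1 \<and> r mod 2 \<noteq> s mod 2 \<and>
     real_of_int (r^2 - s^2) \<le> y \<and> real_of_int (2 * r * s) \<le> y}"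

definition Godd :: "nat \<Rightarrow> nat set" where
  "Godd N = {g \<in> {1..N}. odd g}"

lemma Godd_finite [simp]: "finite (Godd N)" unfolding Godd_def by simp

lemma Qset_sub: "Qset y \<subseteq> {0..\<lfloor>y\<rfloor>} \<times> {0..\<lfloor>y\<rfloor>}"
proof
  fix p assume "p \<in> Qset y"
  then obtain r s where p: "p = (r, s)" "s < r" "0 < s" "real_of_int (2 * r * s) \<le> y"
    unfolding Qset_def by auto
  have "r \<le> 2 * r * s" using p by (simp add: mult_le_cancel_left1)
  hence "real_of_int r \<le> y" using p by linarith
  hence "r \<le> \<lfloor>y\<rfloor>" by (simp add: le_floor_iff)
  thus "p \<in> {0..\<lfloor>y\<rfloor>} \<times> {0..\<lfloor>y\<rfloor>}" using p by auto
qed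

lemma Qset_finite [simp]: "finite (Qset y)"
  by (rule finite_subset[OF Qset_sub]) simp

lemma Pset_sub: "Pset y \<subseteq> Qset y" unfolding Pset_def Qset_def by auto

lemma Pset_finite [simp]: "finite (Pset y)"
  by (rule finite_subset[OF Pset_sub]) simp

lemma Pset_mono: "y \<le> y' \<Longrightarrow> Pset y \<subseteq> Pset y'" unfolding Pset_def by auto

lemma sq_diff_ge1: fixes r s :: int assumes "s < r" "0 < s" shows "r^2 - s^2 \<ge> 1"
proof -
  have "(s+1)^2 \<le> r^2" using assms by (intro power_mono) auto
  moreover have "(s+1)^2 = s^2 + 2 * s + 1" by (simp add: power2_eq_square algebra_simps)
  ultimately show ?thesis using assms by linarith
qed

lemma Pset_small: "y < 1 \<Longrightarrow> Pset y = {}"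
  unfolding Pset_def using sq_diff_ge1 by fastforce

lemma par_iff: fixes r s :: int shows "(r mod 2 \<noteq> s mod 2) = (even r \<noteq> even s)"
  by presburger

lemma sqrt_bound: fixes r s :: int assumes "s < r" "0 < s" "real_of_int (2 * r * s) \<le> y"
  shows "real_of_int s \<le> sqrt y"
proof -
  have "s * s \<le> 2 * r * s" using assms by (simp add: mult_right_mono)
  hence "real_of_int s ^ 2 \<le> y" using assms(3) unfolding power2_eq_square
    by (metis of_int_le_iff of_int_mult order_trans)
  thus ?thesis by (simp add: real_le_rsqrt)
qed

lemma Qset_UN_P: assumes "y > 0" "sqrt y \<le> real N"
  shows "Qset y = (\<Union>g\<in>Godd N. (\<lambda>(r, s). (int g * r, int g * s)) ` Pset (y / (real g)^2))"
proof (intro equalityI subsetI)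
  fix p assume "p \<in> Qset y"
  then obtain r s where p: "p = (r, s)" "s < r" "0 < s" "r mod 2 \<noteq> s mod 2"
     "real_of_int (r^2 - s^2) \<le> y" "real_of_int (2 * r * s) \<le> y" unfolding Qset_def by auto
  define d where "d = gcd r s"
  have dpos: "d > 0" using p unfolding d_def by simp
  have "d dvd r" "d dvd s" unfolding d_def by auto
  then obtain r' s' where rs: "r = d * r'" "s = d * s'" by (auto elim!: dvdE)
  have odd_d: "odd d"
  proof
    assume "even d"
    hence "even r" "even s" using \<open>d dvd r\<close> \<open>d dvd s\<close> by (auto intro: dvd_trans)
    thus False using p(4) par_iff by simp
  qed
  have cop: "gcd r' s' = 1"
  proof -
    have "r' = r div d" "s' = s div d" using rs dpos by auto
    hence "coprime r' s'" using div_gcd_coprime[of r s] p unfolding d_def by auto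
    thus ?thesis by simp
  qed
  have par': "r' mod 2 \<noteq> s' mod 2" using p(4) odd_d unfolding rs par_iff by simp
  have s'r': "s' < r'" "0 < s'" using p(2,3) dpos unfolding rs
    by (auto simp: mult_less_cancel_left zero_less_mult_iff)
  define g where "g = nat d"
  have gd: "int g = d" "real g = real_of_int d" using dpos unfolding g_def by auto
  have gpos: "real g > 0" using dpos gd by simp
  have e1: "real_of_int (r^2 - s^2) = (real g)^2 * real_of_int (r'^2 - s'^2)"
    unfolding rs gd by (simp add: power_mult_distrib algebra_simps)
  have e2: "real_of_int (2 * r * s) = (real g)^2 * real_of_int (2 * r' * s')"
    unfolding rs gd by (simp add: power2_eq_square algebra_simps)
  have i1: "real_of_int (r'^2 - s'^2) \<le> y / (real g)^2"
    using p(5) gpos unfolding e1 by (simp add: pos_le_divide_eq mult.commute)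
  have i2: "real_of_int (2 * r' * s') \<le> y / (real g)^2"
    using p(6) gpos unfolding e2 by (simp add: pos_le_divide_eq mult.commute)
  have "d \<le> s" using \<open>d dvd s\<close> p(3) by (simp add: zdvd_imp_le)
  hence "real g \<le> sqrt y" using sqrt_bound[OF p(2,3,6)] gd by linarith
  hence gG: "g \<in> Godd N" using assms odd_d dpos unfolding Godd_def gd(1)[symmetric] by auto
  have "(r', s') \<in> Pset (y / (real g)^2)" unfolding Pset_def using s'r' cop par' i1 i2 by auto
  moreover have "p = (\<lambda>(r, s). (int g * r, int g * s)) (r', s')" using p rs gd by simp
  ultimately show "p \<in> (\<Union>g\<in>Godd N. (\<lambda>(r, s). (int g * r, int g * s)) ` Pset (y / (real g)^2))"
    using gG by blast
next
  fix p assume "p \<in> (\<Union>g\<in>Godd N. (\<lambda>(r, s). (int g * r, int g * s)) ` Pset (y / (real g)^2))"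
  then obtain g r' s' where g: "g \<in> Godd N" "(r', s') \<in> Pset (y / (real g)^2)"
    "p = (int g * r', int g * s')" by auto
  have gpos: "g > 0" "odd g" using g unfolding Godd_def by auto
  have q: "s' < r'" "0 < s'" "r' mod 2 \<noteq> s' mod 2" "real_of_int (r'^2 - s'^2) \<le> y / (real g)^2"
    "real_of_int (2 * r' * s') \<le> y / (real g)^2" using g(2) unfolding Pset_def by auto
  have gr: "real g > 0" using gpos by simp
  have e1: "real_of_int ((int g * r')^2 - (int g * s')^2) = (real g)^2 * real_of_int (r'^2 - s'^2)"
    by (simp add: power_mult_distrib algebra_simps)
  have e2: "real_of_int (2 * (int g * r') * (int g * s')) = (real g)^2 * real_of_int (2 * r' * s')"
    by (simp add: power2_eq_square algebra_simps)
  have "(int g * r') mod 2 \<noteq> (int g * s') mod 2" using q(3) gpos unfolding par_iff by simp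
  moreover have "int g * s' < int g * r'" "0 < int g * s'" using q gpos by auto
  moreover have "real_of_int ((int g * r')^2 - (int g * s')^2) \<le> y"
    unfolding e1 using q(4) gr by (simp add: pos_le_divide_eq mult.commute)
  moreover have "real_of_int (2 * (int g * r') * (int g * s')) \<le> y"
    unfolding e2 using q(5) gr by (simp add: pos_le_divide_eq mult.commute)
  ultimately show "p \<in> Qset y" unfolding Qset_def g(3) by simp
qed

lemma Q_P: assumes "y > 0" "sqrt y \<le> real N"
  shows "real (card (Qset y)) = (\<Sum>g\<in>Godd N. real (card (Pset (y / (real g)^2))))"
proof -
  have inj: "inj_on (\<lambda>(r, s). (int g * r, int g * s)) A" if "g > 0" for g :: nat and A
    using that by (auto simp: inj_on_def)
  have "card (Qset y) = (\<Sum>g\<in>Godd N. card ((\<lambda>(r, s). (int g * r, int g * s)) ` Pset (y / (real g)^2)))"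
    unfolding Qset_UN_P[OF assms]
  proof (rule card_UN_disjoint)
    show "\<forall>i\<in>Godd N. \<forall>j\<in>Godd N. i \<noteq> j \<longrightarrow>
      (\<lambda>(r, s). (int i * r, int i * s)) ` Pset (y / (real i)^2) \<inter>
      (\<lambda>(r, s). (int j * r, int j * s)) ` Pset (y / (real j)^2) = {}"
    proof (intro ballI impI)
      fix i j assume ij: "i \<in> Godd N" "j \<in> Godd N" "i \<noteq> j"
      show "(\<lambda>(r, s). (int i * r, int i * s)) ` Pset (y / (real i)^2) \<inter>
        (\<lambda>(r, s). (int j * r, int j * s)) ` Pset (y / (real j)^2) = {}"
      proof (rule ccontr)
        assume "\<not> ?thesis"
        then obtain r1 s1 r2 s2 where h: "(r1, s1) \<in> Pset (y / (real i)^2)" "(r2, s2) \<in> Pset (y / (real j)^2)"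
          "int i * r1 = int j * r2" "int i * s1 = int j * s2" by auto
        have "gcd r1 s1 = 1" "gcd r2 s2 = 1" using h unfolding Pset_def by auto
        hence "gcd (int i * r1) (int i * s1) = int i" "gcd (int j * r2) (int j * s2) = int j"
          by (simp_all add: gcd_mult_left)
        thus False using h ij by simp
      qed
    qed
  qed (auto)
  also have "\<dots> = (\<Sum>g\<in>Godd N. card (Pset (y / (real g)^2)))"
    by (intro sum.cong refl card_image inj) (auto simp: Godd_def)
  finally show ?thesis by simp
qed

lemma D_UN_P:
  "D n = (\<Union>k\<in>Godd (nat \<lfloor>n\<rfloor>). (\<lambda>(r, s). (int k, r, s)) ` Pset (n / real k))"
proof (intro equalityI subsetI)
  fix p assume "p \<in> D n"
  then obtain k r s where p: "p = (k, r, s)" "k > 0" "odd k" "s < r" "0 < s" "gcd r s = 1"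
    "r mod 2 \<noteq> s mod 2" "real_of_int (k * (r^2 - s^2)) \<le> n" "real_of_int (2 * k * r * s) \<le> n"
    unfolding D_def by auto
  have kr: "real_of_int k > 0" using p by simp
  have "k \<le> k * (r^2 - s^2)" using sq_diff_ge1[OF p(4,5)] p(2) by (simp add: mult_le_cancel_left1)
  hence "real_of_int k \<le> n" using p(8) by linarith
  hence "k \<le> \<lfloor>n\<rfloor>" by (simp add: le_floor_iff)
  hence kG: "nat k \<in> Godd (nat \<lfloor>n\<rfloor>)" using p unfolding Godd_def by (auto simp: even_nat_iff)
  have i1: "real_of_int (r^2 - s^2) \<le> n / real (nat k)"
    using p(8) kr p(2) by (simp add: pos_le_divide_eq mult.commute)
  have i2: "real_of_int (2 * r * s) \<le> n / real (nat k)"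
    using p(9) kr p(2) by (simp add: pos_le_divide_eq mult.commute mult.left_commute)
  have "(r, s) \<in> Pset (n / real (nat k))" unfolding Pset_def using p i1 i2 by auto
  moreover have "p = (\<lambda>(r, s). (int (nat k), r, s)) (r, s)" using p by simp
  ultimately show "p \<in> (\<Union>k\<in>Godd (nat \<lfloor>n\<rfloor>). (\<lambda>(r, s). (int k, r, s)) ` Pset (n / real k))"
    using kG by blast
next
  fix p assume "p \<in> (\<Union>k\<in>Godd (nat \<lfloor>n\<rfloor>). (\<lambda>(r, s). (int k, r, s)) ` Pset (n / real k))"
  then obtain k r s where k: "k \<in> Godd (nat \<lfloor>n\<rfloor>)" "(r, s) \<in> Pset (n / real k)" "p = (int k, r, s)"
    by auto
  have kp: "k > 0" "odd k" using k unfolding Godd_def by auto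
  have kr: "real k > 0" using kp by simp
  have q: "s < r" "0 < s" "gcd r s = 1" "r mod 2 \<noteq> s mod 2" "real_of_int (r^2 - s^2) \<le> n / real k"
    "real_of_int (2 * r * s) \<le> n / real k" using k(2) unfolding Pset_def by auto
  have i1: "real_of_int (int k * (r^2 - s^2)) \<le> n"
    using q(5) kr by (simp add: pos_le_divide_eq mult.commute)
  have i2: "real_of_int (2 * int k * r * s) \<le> n"
    using q(6) kr by (simp add: pos_le_divide_eq mult.commute mult.left_commute)
  show "p \<in> D n" unfolding D_def k(3) using q kp i1 i2 by auto
qed

lemma D_P: "real (card (D n)) = (\<Sum>k\<in>Godd (nat \<lfloor>n\<rfloor>). real (card (Pset (n / real k))))"
proof -
  have "card (D n) = (\<Sum>k\<in>Godd (nat \<lfloor>n\<rfloor>). card ((\<lambda>(r, s). (int k, r, s)) ` Pset (n / real k)))"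
    unfolding D_UN_P by (rule card_UN_disjoint) auto
  also have "\<dots> = (\<Sum>k\<in>Godd (nat \<lfloor>n\<rfloor>). card (Pset (n / real k)))"
    by (intro sum.cong refl card_image) (auto simp: inj_on_def)
  finally show ?thesis by simp
qed

definition oddsum :: "nat \<Rightarrow> real" where "oddsum N = (\<Sum>g\<in>Godd N. 1 / (real g)^2)"
definition allsum :: "nat \<Rightarrow> real" where "allsum M = (\<Sum>n<M. 1 / (real n + 1)^2)"
definition Hodd :: "nat \<Rightarrow> real" where "Hodd N = (\<Sum>k\<in>Godd N. 1 / real k)"

lemma Godd_0 [simp]: "Godd 0 = {}" unfolding Godd_def by auto

lemma Godd_Suc: "Godd (Suc N) = (if odd (Suc N) then insert (Suc N) (Godd N) else Godd N)"
  unfolding Godd_def by (auto simp: le_Suc_eq)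

lemma Godd_mono: "M \<le> N \<Longrightarrow> Godd M \<subseteq> Godd N" unfolding Godd_def by auto

lemma Godd_notin: "Suc N \<notin> Godd N" unfolding Godd_def by auto

lemma allsum_split: "allsum (2*M) = oddsum (2*M) + allsum M / 4"
proof (induction M)
  case 0
  then show ?case by (simp add: allsum_def oddsum_def)
next
  case (Suc M)
  have a: "allsum (2 * Suc M) = allsum (2*M) + 1/(2 * real M + 1)^2 + 1/(2 * real M + 2)^2"
    unfolding allsum_def by (simp add: algebra_simps)
  have o: "oddsum (2 * Suc M) = oddsum (2*M) + 1/(2 * real M + 1)^2"
  proof -
    have "Godd (2 * Suc M) = insert (Suc (2*M)) (Godd (2*M))"
      using Godd_Suc[of "Suc (2*M)"] Godd_Suc[of "2*M"] by simp
    moreover have "Suc (2*M) \<notin> Godd (2*M)" by (rule Godd_notin)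
    ultimately show ?thesis unfolding oddsum_def by (simp add: algebra_simps)
  qed
  have b: "allsum (Suc M) = allsum M + 1/(real M + 1)^2" unfolding allsum_def by simp
  have c: "1/(2 * real M + 2)^2 = (1/(real M + 1)^2) / 4"
    by (simp add: field_simps power2_eq_square)
  show ?case using Suc.IH a o b c by simp
qed

lemma allsum_lim: "allsum \<longlonglongrightarrow> pi^2 / 6"
proof -
  have "(\<lambda>n. 1 / (real n + 1)^2) sums (pi^2 / 6)" using inverse_squares_sums by (simp add: add.commute)
  thus ?thesis unfolding allsum_def sums_def .
qed

lemma oddsum_lim: "(\<lambda>M. oddsum (2*M)) \<longlonglongrightarrow> pi^2 / 8"
proof -
  have "(\<lambda>M. allsum (2*M)) \<longlonglongrightarrow> pi^2 / 6"
    using LIMSEQ_subseq_LIMSEQ[OF allsum_lim, of "\<lambda>M. 2*M"]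
    by (simp add: strict_mono_def o_def)
  hence "(\<lambda>M. allsum (2*M) - allsum M / 4) \<longlonglongrightarrow> pi^2 / 6 - (pi^2 / 6) / 4"
    by (rule tendsto_diff[OF _ tendsto_divide[OF allsum_lim tendsto_const]]) simp
  moreover have "pi^2 / 6 - (pi^2 / 6) / 4 = pi^2 / (8::real)" by simp
  ultimately show ?thesis using allsum_split by simp
qed

lemma oddsum_mono: "M \<le> N \<Longrightarrow> oddsum M \<le> oddsum N"
  unfolding oddsum_def by (intro sum_mono2 Godd_mono) auto

lemma oddsum_le: "oddsum N \<le> pi^2 / 8"
proof -
  have "incseq (\<lambda>M. oddsum (2*M))" by (intro incseq_SucI oddsum_mono) auto
  hence "oddsum (2*N) \<le> pi^2/8" by (rule incseq_le[OF _ oddsum_lim])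
  moreover have "oddsum N \<le> oddsum (2*N)" by (rule oddsum_mono) simp
  ultimately show ?thesis by simp
qed

lemma oddsum_approx: assumes "e > 0" shows "\<exists>G. oddsum G \<ge> pi^2 / 8 - e"
proof -
  have "eventually (\<lambda>M. dist (oddsum (2*M)) (pi^2/8) < e) sequentially"
    using oddsum_lim assms by (rule tendstoD)
  then obtain M where "dist (oddsum (2*M)) (pi^2/8) < e" by (meson eventually_sequentially order.refl)
  thus ?thesis by (intro exI[of _ "2*M"]) (simp add: dist_real_def abs_less_iff)
qed

lemma oddsum_1: "1 \<in> Godd N \<Longrightarrow> oddsum N = 1 + (\<Sum>g\<in>Godd N - {1}. 1 / (real g)^2)"
  unfolding oddsum_def by (simp add: sum.remove)

lemma Hodd_eq: "Hodd K = harm K - harm (K div 2) / 2"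
proof (induction K)
  case 0
  then show ?case by (simp add: Hodd_def harm_def)
next
  case (Suc K)
  show ?case
  proof (cases "odd (Suc K)")
    case True
    hence "Suc K div 2 = K div 2" by presburger
    moreover have "Hodd (Suc K) = Hodd K + 1 / real (Suc K)"
      unfolding Hodd_def Godd_Suc using True Godd_notin by simp
    ultimately show ?thesis using Suc.IH by (simp add: harm_Suc field_simps)
  next
    case False
    hence d: "Suc K div 2 = Suc (K div 2)" by presburger
    have h: "Hodd (Suc K) = Hodd K" unfolding Hodd_def Godd_Suc using False by simp
    have "Suc (K div 2) * 2 = Suc K" using False by presburger
    hence e: "real (Suc (K div 2)) * 2 = real (Suc K)" by (metis of_nat_mult of_nat_numeral)
    have e2: "inverse (real (Suc (K div 2))) / 2 = inverse (real (Suc K))"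
      unfolding e[symmetric] by (simp add: field_simps)
    have "Hodd (Suc K) = harm K - harm (K div 2) / 2" using h Suc.IH by simp
    also have "\<dots> = (harm K + inverse (real (Suc K))) - (harm (K div 2) + inverse (real (Suc (K div 2)))) / 2"
      using e2 by (simp add: diff_divide_distrib add_divide_distrib)
    also have "\<dots> = harm (Suc K) - harm (Suc K div 2) / 2" unfolding d harm_Suc by simp
    finally show ?thesis .
  qed
qed

lemma harm_upper: "n > 0 \<Longrightarrow> (harm n :: real) \<le> ln (real n) + 1"
  using euler_mascheroni_sequence_decreasing[of 1 n] by (simp add: harm_def)

lemma Hodd_bound: assumes "K \<ge> 2" shows "\<bar>Hodd K - ln (real K) / 2\<bar> \<le> 2"
proof -
  define m where "m = K div 2"
  have mn: "m \<ge> 1" "m \<le> K" "K \<le> 2 * (m + 1)" using assms unfolding m_def by auto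
  have m3: "real K \<le> real (2 * (m + 1))" using mn(3) by (simp only: of_nat_le_iff)
  have m: "m \<ge> 1" "real m \<le> real K" "real K \<le> 2 * (real m + 1)" using mn m3 by simp_all
  have h1: "ln (real K + 1) \<le> harm K" "harm K \<le> ln (real K) + 1"
    using harm_ge_ln[of K] harm_upper[of K] assms by auto
  have h2: "ln (real m + 1) \<le> harm m" "harm m \<le> ln (real m) + 1"
    using harm_ge_ln[of m] harm_upper[of m] m by auto
  have l1: "ln (real K) \<le> ln (real K + 1)" using assms by simp
  have l2: "ln (real m) \<le> ln (real K)" using m by simp
  have l3: "ln (real K) \<le> ln 2 + ln (real m + 1)"
  proof -
    have "ln (real K) \<le> ln (2 * (real m + 1))" using m assms by simp
    also have "\<dots> = ln 2 + ln (real m + 1)" by (rule ln_mult_pos) auto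
    finally show ?thesis .
  qed
  have l4: "ln (2::real) \<le> 1" using ln_2_less_1 by simp
  show ?thesis unfolding Hodd_eq m_def[symmetric] using h1 h2 l1 l2 l3 l4 by (simp add: abs_le_iff)
qed

definition Pf :: "real \<Rightarrow> real" where "Pf y = real (card (Pset y))"
definition Qf :: "real \<Rightarrow> real" where "Qf y = real (card (Qset y))"
definition c0 :: real where "c0 = alpha / 2"
definition SS :: real where "SS = pi^2 / 8"
definition qq :: real where "qq = SS - 1"
definition pp :: real where "pp = c0 / SS"

lemma alpha_pos: "alpha > 0"
proof -
  have "sqrt (1 + sqrt 2) > 1" using sqrt2_gt1 by simp
  thus ?thesis unfolding alpha_def by (intro ln_gt_zero)
qed

lemma c0_pos: "c0 > 0" unfolding c0_def using alpha_pos by simp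

lemma qq_bounds: "0 \<le> qq" "qq < 1"
proof -
  have "pi^2 > (3::real)^2" using pi_gt3 by (intro power_strict_mono) auto
  thus "0 \<le> qq" unfolding qq_def SS_def by simp
  have "pi^2 < (4::real)^2" using pi_less_4 by (intro power_strict_mono) auto
  thus "qq < 1" unfolding qq_def SS_def by simp
qed

lemma SS_eq: "SS = 1 + qq" unfolding qq_def by simp
lemma c0_eq: "c0 = pp * (1 + qq)" unfolding pp_def SS_eq[symmetric] using qq_bounds by (simp add: SS_eq)
lemma pp_pos: "pp > 0" unfolding pp_def using c0_pos qq_bounds SS_eq by simp
lemma pp_le: "pp \<le> c0"
proof -
  have "pp * qq \<ge> 0" using pp_pos qq_bounds by simp
  thus ?thesis using c0_eq by (simp add: algebra_simps)
qed

lemma Pf_nonneg: "Pf y \<ge> 0" unfolding Pf_def by simp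
lemma Pf_mono: "y \<le> y' \<Longrightarrow> Pf y \<le> Pf y'"
  unfolding Pf_def by (simp add: card_mono Pset_mono)
lemma Pf_le_Qf: "Pf y \<le> Qf y"
  unfolding Pf_def Qf_def by (simp add: card_mono Pset_sub)

lemma ev_sqrt: assumes "e > 0" shows "eventually (\<lambda>y. B * (sqrt y + 1) \<le> e * y) at_top"
proof -
  have "((\<lambda>y. (sqrt y + 1) / y) \<longlongrightarrow> 0) at_top" by real_asymp
  hence "((\<lambda>y. B * ((sqrt y + 1) / y)) \<longlongrightarrow> 0) at_top" by (rule tendsto_mult_right_zero)
  hence "eventually (\<lambda>y. B * ((sqrt y + 1) / y) < e) at_top" using assms by (rule order_tendstoD(2))
  moreover have "eventually (\<lambda>y::real. y > 0) at_top" by (rule eventually_gt_at_top)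
  ultimately show ?thesis
  proof eventually_elim
    case (elim y)
    hence "B * (sqrt y + 1) / y < e" by simp
    thus ?case using elim by (simp add: pos_divide_less_eq)
  qed
qed

lemma Q_ev: assumes "e > 0" shows "eventually (\<lambda>y. \<bar>Qf y - c0 * y\<bar> \<le> e * y) at_top"
proof -
  have "eventually (\<lambda>y. 2 * (sqrt y + 1) \<le> e * y) at_top" by (rule ev_sqrt[OF assms])
  moreover have "eventually (\<lambda>y::real. y > 0) at_top" by (rule eventually_gt_at_top)
  ultimately show ?thesis
  proof eventually_elim
    case (elim y)
    thus ?case using Q_asymp_bound[of y] unfolding Qf_def c0_def by (simp add: mult.commute)
  qed
qed

lemma one_in_Godd: "N \<ge> 1 \<Longrightarrow> 1 \<in> Godd N" unfolding Godd_def by auto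

lemma Qf_split: assumes "y \<ge> 1" "sqrt y \<le> real N"
  shows "Qf y = Pf y + (\<Sum>g\<in>Godd N - {1}. Pf (y / (real g)^2))"
proof -
  have "N \<ge> 1" using assms by (metis less_one not_less of_nat_0 real_sqrt_ge_one order_trans
        le_less_trans zero_less_one of_nat_less_iff not_le) 
  hence "1 \<in> Godd N" by (rule one_in_Godd)
  thus ?thesis using Q_P[of y N] assms unfolding Qf_def Pf_def
    by (simp add: sum.remove)
qed

lemma card_Godd: "real (card (Godd N)) \<le> real N"
proof -
  have "card (Godd N) \<le> card {1..N}" unfolding Godd_def by (intro card_mono) auto
  thus ?thesis by simp
qed

definition UB :: "real \<Rightarrow> bool" where "UB u \<longleftrightarrow> eventually (\<lambda>y. Pf y \<le> u * y) at_top"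
definition LB :: "real \<Rightarrow> bool" where "LB l \<longleftrightarrow> eventually (\<lambda>y. l * y \<le> Pf y) at_top"

lemma UB_mono: assumes "UB u" "u \<le> u'" shows "UB u'"
proof -
  have "eventually (\<lambda>y::real. y \<ge> 0) at_top" by (rule eventually_ge_at_top)
  with assms(1) show ?thesis unfolding UB_def
    by eventually_elim (use assms(2) in \<open>meson mult_right_mono order_trans\<close>)
qed

lemma LB_mono: assumes "LB l" "l' \<le> l" shows "LB l'"
proof -
  have "eventually (\<lambda>y::real. y \<ge> 0) at_top" by (rule eventually_ge_at_top)
  with assms(1) show ?thesis unfolding LB_def
    by eventually_elim (use assms(2) in \<open>meson mult_right_mono order_trans\<close>)
qed

lemma LB_0: "LB 0" unfolding LB_def by (simp add: Pf_nonneg)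

lemma UB_nonneg: assumes "UB u" shows "u \<ge> 0"
proof (rule ccontr)
  assume "\<not> u \<ge> 0"
  have "eventually (\<lambda>y::real. y > 0) at_top" by (rule eventually_gt_at_top)
  with assms have "eventually (\<lambda>y::real. False) at_top" unfolding UB_def
  proof eventually_elim
    case (elim y)
    hence "u * y < 0" using \<open>\<not> u \<ge> 0\<close> by (simp add: mult_neg_pos)
    thus False using elim Pf_nonneg[of y] by linarith
  qed
  thus False by simp
qed

lemma UB_init: "UB (c0 + 1)"
proof -
  have "eventually (\<lambda>y. \<bar>Qf y - c0 * y\<bar> \<le> 1 * y) at_top" by (rule Q_ev) simp
  thus ?thesis unfolding UB_def
  proof eventually_elim
    case (elim y)
    thus ?case using Pf_le_Qf[of y] by (simp add: algebra_simps abs_le_iff)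
  qed
qed

lemma step1: assumes "UB u" "e > 0" shows "LB (c0 - qq * u - e)"
proof -
  have u0: "u \<ge> 0" using UB_nonneg[OF assms(1)] .
  obtain Y0 where Y0: "\<And>y. y \<ge> Y0 \<Longrightarrow> Pf y \<le> u * y"
    using assms(1) unfolding UB_def eventually_at_top_linorder by blast
  define B where "B = Pf Y0"
  have B0: "B \<ge> 0" unfolding B_def by (rule Pf_nonneg)
  have key: "Pf y \<ge> Qf y - qq * u * y - B * (sqrt y + 1)" if y: "y \<ge> 1" for y
  proof -
    define N where "N = nat \<lceil>sqrt y\<rceil>"
    have N0: "real N = of_int \<lceil>sqrt y\<rceil>" unfolding N_def using y by simp
    have N: "sqrt y \<le> real N" "real N \<le> sqrt y + 1" unfolding N0 using ceiling_correct[of "sqrt y"] by linarith+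
    have "1 \<le> sqrt y" using y by simp
    hence "1 \<le> real N" using N by linarith
    hence N1: "1 \<in> Godd N" by (intro one_in_Godd) simp
    have spl: "Qf y = Pf y + (\<Sum>g\<in>Godd N - {1}. Pf (y / (real g)^2))" by (rule Qf_split[OF y N(1)])
    have tb: "Pf (y / (real g)^2) \<le> u * y * (1 / (real g)^2) + B" for g :: nat
    proof (cases "Y0 \<le> y / (real g)^2")
      case True
      thus ?thesis using Y0[OF True] B0 by simp
    next
      case False
      hence "Pf (y / (real g)^2) \<le> B" unfolding B_def by (intro Pf_mono) simp
      moreover have "u * y * (1 / (real g)^2) \<ge> 0" using u0 y by simp
      ultimately show ?thesis by simp
    qed
    have s1: "(\<Sum>g\<in>Godd N - {1}. Pf (y / (real g)^2)) \<le> (\<Sum>g\<in>Godd N - {1}. u * y * (1 / (real g)^2) + B)"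
      by (intro sum_mono tb)
    have s2: "(\<Sum>g\<in>Godd N - {1}. u * y * (1 / (real g)^2) + B) = u * y * (\<Sum>g\<in>Godd N - {1}. 1 / (real g)^2) + B * real (card (Godd N - {1}))"
      by (simp add: sum.distrib sum_distrib_left)
    have s3: "(\<Sum>g\<in>Godd N - {1}. 1 / (real g)^2) = oddsum N - 1"
      using oddsum_1[OF N1] by simp
    have s4: "oddsum N - 1 \<le> qq" using oddsum_le[of N] unfolding qq_def SS_def by simp
    have s5: "u * y * (oddsum N - 1) \<le> u * y * qq" using u0 y s4 by (intro mult_left_mono) auto
    have "real (card (Godd N - {1})) \<le> sqrt y + 1"
    proof -
      have "card (Godd N - {1}) \<le> card (Godd N)" by (intro card_mono) auto
      thus ?thesis using card_Godd[of N] N by linarith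
    qed
    hence s6: "B * real (card (Godd N - {1})) \<le> B * (sqrt y + 1)" using B0 by (intro mult_left_mono)
    have "(\<Sum>g\<in>Godd N - {1}. Pf (y / (real g)^2)) \<le> u * y * qq + B * (sqrt y + 1)"
      using s1 s5 s6 unfolding s2 s3 by linarith
    thus ?thesis using spl by (simp add: algebra_simps)
  qed
  have "eventually (\<lambda>y. \<bar>Qf y - c0 * y\<bar> \<le> (e/2) * y) at_top" using assms by (intro Q_ev) simp
  moreover have "eventually (\<lambda>y. B * (sqrt y + 1) \<le> (e/2) * y) at_top" using assms by (intro ev_sqrt) simp
  moreover have "eventually (\<lambda>y::real. y \<ge> 1) at_top" by (rule eventually_ge_at_top)
  ultimately show ?thesis unfolding LB_def
  proof eventually_elim
    case (elim y)
    have k: "Pf y \<ge> Qf y - qq * u * y - B * (sqrt y + 1)" using key elim(3) .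
    have a: "c0 * y - Qf y \<le> (e/2) * y" using elim(1) unfolding abs_le_iff by linarith
    have "(c0 - qq * u - e) * y = c0 * y - qq * u * y - (e/2) * y - (e/2) * y" by (simp add: algebra_simps)
    thus ?case using k a elim(2) by linarith
  qed
qed

lemma step2_pos: assumes "LB l" "l \<ge> 0" "e > 0" shows "UB (c0 - qq * l + e)"
proof -
  define eta where "eta = e / (2 * (l + 1))"
  have eta: "eta > 0" "l * eta \<le> e / 2"
  proof -
    show "eta > 0" using assms unfolding eta_def by simp
    have "l * eta = (e/2) * (l / (l + 1))" unfolding eta_def using assms by (simp add: field_simps)
    also have "\<dots> \<le> (e/2) * 1" using assms by (intro mult_left_mono) auto
    finally show "l * eta \<le> e / 2" by simp
  qed
  obtain G0 where G0: "oddsum G0 \<ge> SS - eta" using oddsum_approx[OF eta(1)] unfolding SS_def by blast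
  define G where "G = max G0 1"
  have G: "oddsum G \<ge> SS - eta" "G \<ge> 1" using G0 oddsum_mono[of G0 G] unfolding G_def by auto
  have G1: "1 \<in> Godd G" using G by (intro one_in_Godd) auto
  obtain Y1 where Y1: "\<And>y. y \<ge> Y1 \<Longrightarrow> l * y \<le> Pf y"
    using assms(1) unfolding LB_def eventually_at_top_linorder by blast
  define Y0 where "Y0 = max Y1 0"
  have Y0: "\<And>y. y \<ge> Y0 \<Longrightarrow> l * y \<le> Pf y" "Y0 \<ge> 0" using Y1 unfolding Y0_def by auto
  have key: "Pf y \<le> Qf y - l * y * (qq - eta)" if y: "y \<ge> 1" "y \<ge> Y0 * (real G)^2" for y
  proof -
    define N where "N = max G (nat \<lceil>sqrt y\<rceil>)"
    have "real (nat \<lceil>sqrt y\<rceil>) \<ge> sqrt y" by linarith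
    moreover have "real (nat \<lceil>sqrt y\<rceil>) \<le> real N" unfolding N_def by simp
    ultimately have N: "sqrt y \<le> real N" by linarith
    have spl: "Qf y = Pf y + (\<Sum>g\<in>Godd N - {1}. Pf (y / (real g)^2))" by (rule Qf_split[OF y(1) N])
    have "(\<Sum>g\<in>Godd G - {1}. Pf (y / (real g)^2)) \<le> (\<Sum>g\<in>Godd N - {1}. Pf (y / (real g)^2))"
      using Godd_mono[of G N] unfolding N_def by (intro sum_mono2) (auto simp: Pf_nonneg)
    moreover have "(\<Sum>g\<in>Godd G - {1}. l * y * (1 / (real g)^2)) \<le> (\<Sum>g\<in>Godd G - {1}. Pf (y / (real g)^2))"
    proof (intro sum_mono)
      fix g assume g: "g \<in> Godd G - {1}"
      hence gG: "g \<ge> 1" "g \<le> G" unfolding Godd_def by auto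
      have "Y0 * (real g)^2 \<le> Y0 * (real G)^2" using gG Y0(2) by (intro mult_left_mono power_mono) auto
      hence "Y0 * (real g)^2 \<le> y" using y by linarith
      hence "Y0 \<le> y / (real g)^2" using gG by (simp add: pos_le_divide_eq)
      hence "l * (y / (real g)^2) \<le> Pf (y / (real g)^2)" by (rule Y0(1))
      thus "l * y * (1 / (real g)^2) \<le> Pf (y / (real g)^2)" by simp
    qed
    moreover have "(\<Sum>g\<in>Godd G - {1}. l * y * (1 / (real g)^2)) = l * y * (oddsum G - 1)"
      using oddsum_1[OF G1] by (simp add: sum_distrib_left)
    moreover have "l * y * (qq - eta) \<le> l * y * (oddsum G - 1)"
      using G assms y unfolding qq_def by (intro mult_left_mono) auto
    ultimately show ?thesis using spl by linarith
  qed
  have "eventually (\<lambda>y. \<bar>Qf y - c0 * y\<bar> \<le> (e/2) * y) at_top" using assms by (intro Q_ev) simp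
  moreover have "eventually (\<lambda>y::real. y \<ge> max 1 (Y0 * (real G)^2)) at_top" by (rule eventually_ge_at_top)
  ultimately show ?thesis unfolding UB_def
  proof eventually_elim
    case (elim y)
    have y: "y \<ge> 1" "y \<ge> Y0 * (real G)^2" using elim by auto
    have "Pf y \<le> Qf y - l * y * (qq - eta)" using key[OF y] .
    moreover have "l * eta * y \<le> (e/2) * y" by (rule mult_right_mono[OF eta(2)]) (use y in simp)
    moreover have a: "Qf y - c0 * y \<le> (e/2) * y" using elim(1) unfolding abs_le_iff by linarith
    moreover have "(c0 - qq * l + e) * y = c0 * y - l * y * qq + (e/2) * y + (e/2) * y" by (simp add: algebra_simps)
    moreover have "l * y * (qq - eta) = l * y * qq - l * eta * y" by (simp add: algebra_simps)
    ultimately show ?case by linarith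
  qed
qed

lemma step2: assumes "LB l" "e > 0" shows "UB (c0 - qq * l + e)"
proof (cases "l \<ge> 0")
  case True
  thus ?thesis using step2_pos assms by blast
next
  case False
  have "UB (c0 - qq * 0 + e)" using step2_pos[OF LB_0 _ assms(2)] by simp
  moreover have "qq * l \<le> 0" using False qq_bounds by (intro mult_nonneg_nonpos) auto
  hence "c0 - qq * 0 + e \<le> c0 - qq * l + e" by simp
  ultimately show ?thesis by (rule UB_mono)
qed

lemma iterate: assumes "e > 0"
  shows "UB (pp + (qq^2)^k * (c0 + 1 - pp) + e / (1 - qq))"
proof (induction k)
  case 0
  have "c0 + 1 \<le> pp + (c0 + 1 - pp) + e / (1 - qq)" using assms qq_bounds by simp
  thus ?case using UB_init UB_mono by simp
next
  case (Suc k)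
  define Dk where "Dk = (qq^2)^k * (c0 + 1 - pp) + e / (1 - qq)"
  have "LB (c0 - qq * (pp + Dk) - e)" using step1[OF Suc.IH[folded Dk_def add.assoc] assms]
    by (simp add: Dk_def add.assoc)
  hence "UB (c0 - qq * (c0 - qq * (pp + Dk) - e) + e)" using step2 assms by blast
  moreover have "c0 - qq * (c0 - qq * (pp + Dk) - e) + e = pp + (qq^2)^(Suc k) * (c0 + 1 - pp) + e / (1 - qq)"
  proof -
    have q1: "1 - qq \<noteq> 0" using qq_bounds by simp
    have A: "c0 - qq * (c0 - qq * (pp + Dk) - e) + e = pp + qq^2 * Dk + (1 + qq) * e"
      unfolding c0_eq by (simp add: algebra_simps power2_eq_square)
    have B: "qq^2 * Dk + (1 + qq) * e = (qq^2)^(Suc k) * (c0 + 1 - pp) + e / (1 - qq)"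
      unfolding Dk_def using q1 by (simp add: field_simps power2_eq_square)
    show ?thesis using A B by simp
  qed
  ultimately show ?case by simp
qed

lemma P_asymp: assumes "d > 0" shows "eventually (\<lambda>y. \<bar>Pf y - pp * y\<bar> \<le> d * y) at_top"
proof -
  define e where "e = d * (1 - qq) / 4"
  have q1: "1 - qq > 0" using qq_bounds by simp
  have e: "e > 0" "e / (1 - qq) = d / 4"
  proof -
    show "e > 0" using assms q1 unfolding e_def by simp
    have q4: "4 - 4 * qq \<noteq> 0" "1 - qq \<noteq> 0" using q1 by auto
    show "e / (1 - qq) = d / 4" unfolding e_def using q4 by (simp add: field_simps)
  qed
  have d0: "c0 + 1 - pp \<ge> 0" using pp_le by simp
  have "(\<lambda>k. (qq^2)^k) \<longlonglongrightarrow> 0" using qq_bounds by (intro LIMSEQ_power_zero) (simp add: power_less_one_iff abs_of_nonneg)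
  hence "(\<lambda>k. (qq^2)^k * (c0 + 1 - pp)) \<longlonglongrightarrow> 0" by (rule tendsto_mult_left_zero)
  hence "eventually (\<lambda>k. (qq^2)^k * (c0 + 1 - pp) < d/4) sequentially" using assms by (intro order_tendstoD(2)) auto
  then obtain k where k: "(qq^2)^k * (c0 + 1 - pp) < d/4" by (meson eventually_sequentially order.refl)
  have U: "UB (pp + d/2)" using iterate[OF e(1), of k] k e(2) by (elim UB_mono) simp
  have "LB (c0 - qq * (pp + d/2) - e)" by (rule step1[OF U e(1)])
  moreover have "pp - d \<le> c0 - qq * (pp + d/2) - e"
  proof -
    have "c0 - qq * (pp + d/2) - e = pp - qq * d / 2 - e" unfolding c0_eq by (simp add: algebra_simps)
    moreover have "qq * d / 2 \<le> d / 2" using qq_bounds assms by (simp add: mult_left_le_one_le)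
    moreover have "e \<le> d / 4" using e qq_bounds assms unfolding e_def by (simp add: mult_left_le_one_le)
    ultimately show ?thesis using assms by linarith
  qed
  ultimately have L: "LB (pp - d)" by (rule LB_mono)
  have U2: "UB (pp + d)" using U assms by (elim UB_mono) simp
  from L U2 show ?thesis unfolding LB_def UB_def
    by eventually_elim (simp add: algebra_simps abs_le_iff)
qed

lemma P_unif: assumes "d > 0" shows "\<exists>C\<ge>0. \<forall>y\<ge>0. \<bar>Pf y - pp * y\<bar> \<le> d * y + C"
proof -
  obtain Y0 where Y0: "\<And>y. y \<ge> Y0 \<Longrightarrow> \<bar>Pf y - pp * y\<bar> \<le> d * y"
    using P_asymp[OF assms] unfolding eventually_at_top_linorder by blast
  define Y1 where "Y1 = max Y0 0"
  define C where "C = Pf Y1 + pp * Y1"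
  have C0: "C \<ge> 0" unfolding C_def Y1_def using Pf_nonneg pp_pos by simp
  have "\<bar>Pf y - pp * y\<bar> \<le> d * y + C" if y: "y \<ge> 0" for y
  proof (cases "y \<ge> Y1")
    case True
    hence "\<bar>Pf y - pp * y\<bar> \<le> d * y" using Y0 unfolding Y1_def by simp
    thus ?thesis using C0 by simp
  next
    case False
    have p: "0 \<le> pp * y" using pp_pos y by simp
    have "\<bar>Pf y - pp * y\<bar> \<le> Pf y + pp * y" unfolding abs_le_iff using Pf_nonneg[of y] p by linarith
    also have "\<dots> \<le> Pf Y1 + pp * Y1" using False pp_pos by (intro add_mono Pf_mono mult_left_mono) auto
    also have "\<dots> \<le> d * y + C" unfolding C_def using assms y by simp
    finally show ?thesis .
  qed
  thus ?thesis using C0 by blast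
qed

lemma D_approx: assumes "d > 0"
  shows "\<exists>C\<ge>0. \<forall>n\<ge>1. \<bar>real (card (D n)) - pp * n * Hodd (nat \<lfloor>n\<rfloor>)\<bar> \<le> d * n * Hodd (nat \<lfloor>n\<rfloor>) + C * n"
proof -
  obtain C where C: "C \<ge> 0" "\<And>y. y \<ge> 0 \<Longrightarrow> \<bar>Pf y - pp * y\<bar> \<le> d * y + C"
    using P_unif[OF assms] by blast
  have "\<bar>real (card (D n)) - pp * n * Hodd (nat \<lfloor>n\<rfloor>)\<bar> \<le> d * n * Hodd (nat \<lfloor>n\<rfloor>) + C * n"
    if n: "n \<ge> 1" for n
  proof -
    define K where "K = nat \<lfloor>n\<rfloor>"
    have K: "real K \<le> n" unfolding K_def using n by linarith
    have e1: "real (card (D n)) = (\<Sum>k\<in>Godd K. Pf (n / real k))" unfolding D_P K_def Pf_def ..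
    have e2: "pp * n * Hodd K = (\<Sum>k\<in>Godd K. pp * (n / real k))"
      unfolding Hodd_def by (simp add: sum_distrib_left)
    have e3: "d * n * Hodd K + C * real (card (Godd K)) = (\<Sum>k\<in>Godd K. d * (n / real k) + C)"
      unfolding Hodd_def by (simp add: sum_distrib_left sum.distrib)
    have "\<bar>real (card (D n)) - pp * n * Hodd K\<bar> = \<bar>\<Sum>k\<in>Godd K. (Pf (n / real k) - pp * (n / real k))\<bar>"
      unfolding e1 e2 by (simp add: sum_subtractf)
    also have "\<dots> \<le> (\<Sum>k\<in>Godd K. \<bar>Pf (n / real k) - pp * (n / real k)\<bar>)" by (rule sum_abs)
    also have "\<dots> \<le> (\<Sum>k\<in>Godd K. d * (n / real k) + C)" using n by (intro sum_mono C(2)) auto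
    also have "\<dots> = d * n * Hodd K + C * real (card (Godd K))" using e3 by simp
    also have "\<dots> \<le> d * n * Hodd K + C * n"
      using card_Godd[of K] K C(1) by (intro add_left_mono mult_left_mono) auto
    finally show ?thesis unfolding K_def .
  qed
  thus ?thesis using C(1) by blast
qed

lemma H_bound: assumes "n \<ge> 2" shows "\<bar>Hodd (nat \<lfloor>n\<rfloor>) - ln n / 2\<bar> \<le> 3"
proof -
  define K where "K = nat \<lfloor>n\<rfloor>"
  have K: "K \<ge> 2" "real K \<le> n" "n \<le> 2 * real K" unfolding K_def using assms by linarith+
  have "\<bar>Hodd K - ln (real K) / 2\<bar> \<le> 2" by (rule Hodd_bound[OF K(1)])
  moreover have "ln (real K) \<le> ln n" using K by simp
  moreover have "ln n \<le> ln 2 + ln (real K)"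
  proof -
    have "ln n \<le> ln (2 * real K)" using K by simp
    also have "\<dots> = ln 2 + ln (real K)" by (rule ln_mult_pos) (use K in auto)
    finally show ?thesis .
  qed
  moreover have "ln (2::real) \<le> 1" using ln_2_less_1 by simp
  ultimately show ?thesis unfolding K_def[symmetric] by (simp add: abs_le_iff)
qed

lemma const_eq: "2 * alpha / pi^2 = pp / 2"
  unfolding pp_def c0_def SS_def by (simp add: field_simps)

theorem proposition3p8:
  shows "(\<lambda>n::real. real (card (D n))) \<sim>[at_top] (\<lambda>n. 2 * alpha / pi\<^sup>2 * n * ln n)"
proof -
  define g where "g = (\<lambda>n::real. 2 * alpha / pi\<^sup>2 * n * ln n)"
  have g: "g n = pp / 2 * n * ln n" for n unfolding g_def const_eq ..
  have "(\<lambda>n. real (card (D n)) - g n) \<in> o[at_top](g)"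
  proof (rule landau_o.smallI)
    fix c :: real assume c: "c > 0"
    define d where "d = c * pp / 4"
    have d: "d > 0" unfolding d_def using c pp_pos by simp
    obtain C where C: "C \<ge> 0" "\<And>n. n \<ge> 1 \<Longrightarrow> \<bar>real (card (D n)) - pp * n * Hodd (nat \<lfloor>n\<rfloor>)\<bar>
        \<le> d * n * Hodd (nat \<lfloor>n\<rfloor>) + C * n" using D_approx[OF d] by blast
    define M where "M = 8 * (3 * d + C + 3 * pp) / (c * pp)"
    have "filterlim ln at_top (at_top :: real filter)" by (rule ln_at_top)
    hence "eventually (\<lambda>n::real. M \<le> ln n) at_top" unfolding filterlim_at_top by blast
    moreover have "eventually (\<lambda>n::real. n \<ge> 2) at_top" by (rule eventually_ge_at_top)
    ultimately show "eventually (\<lambda>n. norm (real (card (D n)) - g n) \<le> c * norm (g n)) at_top"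
    proof eventually_elim
      case (elim n)
      define H where "H = Hodd (nat \<lfloor>n\<rfloor>)"
      define L where "L = ln n"
      have n: "n \<ge> 2" "M \<le> L" using elim unfolding L_def by auto
      have L0: "L > 0" unfolding L_def using n by simp
      have HB: "\<bar>H - L / 2\<bar> \<le> 3" unfolding H_def L_def by (rule H_bound[OF n(1)])
      have H0: "H \<le> L / 2 + 3" using HB by (simp add: abs_le_iff)
      have A: "\<bar>real (card (D n)) - pp * n * H\<bar> \<le> d * n * H + C * n" unfolding H_def using C(2) n by simp
      have gn: "g n = pp / 2 * n * L" unfolding g L_def ..
      have gpos: "g n \<ge> 0" unfolding gn using pp_pos n L0 by simp
      have "\<bar>real (card (D n)) - g n\<bar> \<le> \<bar>real (card (D n)) - pp * n * H\<bar> + \<bar>pp * n * H - g n\<bar>" by simp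
      also have "\<bar>pp * n * H - g n\<bar> = pp * n * \<bar>H - L / 2\<bar>"
      proof -
        have "pp * n * H - g n = (pp * n) * (H - L / 2)" unfolding gn by (simp add: algebra_simps)
        moreover have "pp * n \<ge> 0" using pp_pos n by simp
        moreover have "\<bar>(pp * n) * (H - L / 2)\<bar> = \<bar>pp * n\<bar> * \<bar>H - L / 2\<bar>" by (rule abs_mult)
        ultimately show ?thesis by simp
      qed
      also have "\<dots> \<le> pp * n * 3" using HB pp_pos n by (intro mult_left_mono) auto
      finally have B: "\<bar>real (card (D n)) - g n\<bar> \<le> d * n * H + C * n + pp * n * 3" using A by linarith
      have "d * n * H \<le> d * n * (L / 2 + 3)" using H0 d n by (intro mult_left_mono) auto
      hence B2: "\<bar>real (card (D n)) - g n\<bar> \<le> n * (d / 2 * L) + n * (3 * d + C + 3 * pp)"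
        using B by (simp add: algebra_simps)
      have "3 * d + C + 3 * pp = (c * pp / 8) * M" unfolding M_def using c pp_pos by (simp add: field_simps)
      also have "\<dots> \<le> (c * pp / 8) * L" using n c pp_pos by (intro mult_left_mono) auto
      finally have "n * (3 * d + C + 3 * pp) \<le> n * ((c * pp / 8) * L)" using n by (intro mult_left_mono) auto
      moreover have "n * (d / 2 * L) = n * ((c * pp / 8) * L)" unfolding d_def by (simp add: field_simps)
      ultimately have "\<bar>real (card (D n)) - g n\<bar> \<le> n * ((c * pp / 4) * L)" using B2 by linarith
      also have "\<dots> \<le> c * g n"
      proof -
        have "c * g n = n * ((c * pp / 4) * L) + n * ((c * pp / 4) * L)" unfolding gn by (simp add: algebra_simps)
        moreover have "n * ((c * pp / 4) * L) \<ge> 0" using c pp_pos n L0 by simp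
        ultimately show ?thesis by linarith
      qed
      finally show ?case using gpos by simp
    qed
  qed
  thus ?thesis unfolding g_def by (rule smallo_imp_asymp_equiv)
qed

end
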